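(* Let $x>0$, $y\ge 0$, $z>0$ (the approximation is intended for the regime $y,z\ll x$). Let $a=(y+z)/2$ and $g=\sqrt{yz}$. Then $$R_D(x,y,z)=\frac{3}{\sqrt x}\left(\frac{1}{g+z}-\frac{r}{4x}\right),$$ where $$\frac{1}{1-g/x}\ln\frac{2x}{a+g}-\frac{2z}{g+z}<r<\frac{1}{1-a/2x}\ln\frac{8x}{a+g}.$$
   Context: For $x,y\ge0$ not both zero and $z>0$: $R_D(x,y,z)=\frac32\int_0^\infty[(t+x)(t+y)]^{-1/2}(t+z)^{-3/2}\,dt$.
   Formalization: The regime $y,z\ll x$ is given by the two extra hypotheses g < x and a < 2x alongside x > 0, y >= 0, z > 0. The paper assumes this as well. *)

theory Defs
  imports "HOL-Analysis.Analysis"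
begin

definition carlson_RD :: "real \<Rightarrow> real \<Rightarrow> real \<Rightarrow> real" where
  "carlson_RD x y z =
     3 / 2 * integral {0..} (\<lambda>t. 1 / (sqrt ((t + x) * (t + y)) * (t + z) powr (3/2)))"

end

theory Submission
  imports Defs "HOL-Real_Asymp.Real_Asymp"
begin

lemma ftc_Ioi:
  fixes F f :: "real \<Rightarrow> real" and L :: real
  assumes cont: "continuous_on {0..} F"
    and der: "\<And>t. t > 0 \<Longrightarrow> (F has_real_derivative f t) (at t)"
    and nn: "\<And>t. t > 0 \<Longrightarrow> f t \<ge> 0"
    and lim: "(F \<longlongrightarrow> L) at_top"
  shows "(f has_integral (L - F 0)) {0<..}"
proof -
  define h where "h t = (if t > 0 then f t else 0)" for t
  have hint: "(h has_integral (F b - F 0)) {0..b}" if "b \<ge> 0" for b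
  proof (rule fundamental_theorem_of_calculus_interior[OF that])
    show "continuous_on {0..b} F" using cont by (rule continuous_on_subset) auto
    fix t assume "t \<in> {0<..<b}"
    then have "t > 0" by auto
    then show "(F has_vector_derivative h t) (at t)"
      using der[of t] by (simp add: h_def has_real_derivative_iff_has_vector_derivative)
  qed
  have "(h has_integral (L - F 0)) {0..}"
  proof (rule has_integral_to_inf)
    fix y :: real
    show "h integrable_on {0..y}"
    proof (cases "y \<ge> 0")
      case True then show ?thesis using hint by blast
    next
      case False then have "{0..y} = {}" by auto
      then show ?thesis using has_integral_empty integrable_on_def by metis
    qed
  next
    have ev: "\<forall>\<^sub>F y in at_top. integral {0..y} h = F y - F 0"
      by (rule eventually_at_top_linorderI[of 0]) (use hint in \<open>auto intro: integral_unique\<close>)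
    have tend: "((\<lambda>y. F y - F 0) \<longlongrightarrow> L - F 0) at_top"
      by (intro tendsto_intros lim)
    show "((\<lambda>y. integral {0..y} h) \<longlongrightarrow> L - F 0) at_top"
      by (rule Lim_transform_eventually[OF tend]) (use ev in \<open>auto elim: eventually_mono\<close>)
  next
    fix y :: real assume "y \<ge> 0" then show "h y \<ge> 0" using nn by (simp add: h_def)
  qed
  then have "(h has_integral (L - F 0)) {0<..}"
    by (rule has_integral_spike_set_eq[THEN iffD1, rotated 2]) 
       (auto intro: negligible_subset[of "{0}"])
  then show ?thesis by (rule has_integral_eq[rotated]) (simp add: h_def)
qed



lemma der_FK:
  fixes y z t :: real
  assumes "y \<ge> 0" "z > 0" "t > 0"
  shows "((\<lambda>t. -2/(sqrt(t+z)*(sqrt(t+y)+sqrt(t+z)))) has_real_derivative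
          1/(sqrt(t+y) * sqrt(t+z)^3)) (at t)"
proof -
  define q where "q = sqrt(t+y)"
  define s where "s = sqrt(t+z)"
  have q: "q > 0" "q^2 = t+y" using assms by (auto simp: q_def)
  have s: "s > 0" "s^2 = t+z" using assms by (auto simp: s_def)
  show ?thesis
    using assms
    apply (auto intro!: derivative_eq_intros simp flip: q_def s_def)
    using q(1) s(1) by (auto simp add: divide_simps add_pos_pos) (simp add: algebra_simps power3_eq_cube)
qed


lemma powr32: "(u::real) > 0 \<Longrightarrow> u powr (3/2) = sqrt u ^ 3"
proof -
  assume u: "u > 0"
  have "sqrt u ^ 3 = (u powr (1/2)) powr (real 3)"
    using u by (simp add: powr_half_sqrt powr_realpow)
  also have "\<dots> = u powr (3/2)" by (simp add: powr_powr)
  finally show ?thesis by simp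
qed

lemma sqrt_pos_sum: "(t::real) > 0 \<Longrightarrow> y \<ge> 0 \<Longrightarrow> sqrt (t+y) > 0" by simp

lemma der_GL:
  fixes y z t c N :: real
  assumes "y \<ge> 0" "z > 0" "t > 0" "N > 0"
  shows "((\<lambda>t. c * (2 * ln (sqrt(t+y)+sqrt(t+z)) - ln ((sqrt(t+y)+sqrt(t+z))^2 + N))) has_real_derivative
          c * N / (sqrt(t+y) * sqrt(t+z) * ((sqrt(t+y)+sqrt(t+z))^2 + N))) (at t)"
proof -
  define q where "q = sqrt(t+y)"
  define s where "s = sqrt(t+z)"
  have q: "q > 0" "q^2 = t+y" using assms by (auto simp: q_def)
  have s: "s > 0" "s^2 = t+z" using assms by (auto simp: s_def)
  have qs: "q + s > 0" "(q+s)^2 + N > 0" using q s assms by (auto simp: add_pos_pos)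
  show ?thesis
    using assms qs
    apply (auto intro!: derivative_eq_intros simp flip: q_def s_def)
    using q(1) s(1) qs apply (auto simp add: divide_simps add_pos_pos)
    apply (simp add: algebra_simps power2_eq_square)
    by (metis add_pos_nonneg less_numeral_extra(3) zero_le_power2 add.commute)
qed

lemma der_T:
  fixes M t :: real
  assumes "M > 0" "t > 0"
  shows "((\<lambda>t. -(2*t+M)/(2*(t+M)^2)) has_real_derivative t/(t+M)^3) (at t)"
  using assms
  apply (auto intro!: derivative_eq_intros)
  by (auto simp add: divide_simps) (simp add: algebra_simps eval_nat_numeral)

lemma lim_G: "((\<lambda>t::real. c * (2 * ln (sqrt(t+y)+sqrt(t+z)) - ln ((sqrt(t+y)+sqrt(t+z))^2 + M))) \<longlongrightarrow> 0) at_top"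
proof -
  have "((\<lambda>t::real. c * (2 * ln (sqrt(t+y)+sqrt(t+z)) - ln ((sqrt(t+y)+sqrt(t+z))^2 + M))) \<longlongrightarrow> c * (2 * ln 2 - ln 4)) at_top"
    by real_asymp
  moreover have "ln (4::real) = 2 * ln 2"
    using ln_realpow[of 2 2] by simp
  ultimately show ?thesis by simp
qed



lemma frac_cmp:
  fixes t c A B :: real
  assumes "A > 0" "B > 0" "t * B \<le> c * A"
  shows "t / A \<le> c / B"
  using assms by (simp add: divide_simps mult.commute)

lemma sq_mono_base: "(a::real) \<ge> 0 \<Longrightarrow> b \<ge> 0 \<Longrightarrow> a^2 \<le> b^2 \<Longrightarrow> a \<le> b"
  using power2_le_imp_le by blast

lemma diff_id:
  fixes p q s rx t x :: real
  assumes "p > 0" "q > 0" "s > 0" "rx > 0" "p^2 = t+x" "rx^2 = x"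
  shows "1/(q * s^3*rx) - 1/(p*q * s^3) = t/((p+rx)*p*q * s^3*rx)"
proof -
  have e: "(p - rx)*(p+rx) = t" using assms by (simp add: algebra_simps power2_eq_square)
  have "1/(q * s^3*rx) - 1/(p*q * s^3) = (p - rx)/(p*q * s^3*rx)"
    using assms by (simp add: field_simps)
  also have "\<dots> = ((p+rx)*(p - rx))/((p+rx)*(p*q * s^3*rx))"
    using assms by (subst mult_divide_mult_cancel_left) auto
  also have "\<dots> = ((p - rx)*(p+rx))/((p+rx)*p*q * s^3*rx)"
    by (simp add: ac_simps)
  also have "\<dots> = t/((p+rx)*p*q * s^3*rx)" using e by simp
  finally show ?thesis .
qed

lemma ineqA:
  fixes p q s rx t x y z MU :: real
  assumes p: "p > 0" and q: "q > 0" and s: "s > 0" and rx: "rx > 0" and t: "t > 0" and z: "z > 0" and y: "y \<ge> 0"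
    and p2: "p^2 = t+x" and rx2: "rx^2 = x" and q2: "q^2 = t+y" and s2: "s^2 = t+z"
    and MU: "MU = 8*x - 2*(y+z)" "MU > 0"
  shows "1/(q * s^3 * rx) - 8*x/(q * s * ((q+s)^2+MU))/(2*x*rx) \<le> 1/(p*q * s^3)"
proof -
  have x: "x > 0" using rx rx2 by (metis zero_less_power2 less_irrefl)
  have prx: "rx \<le> p" 
    by (rule sq_mono_base) (use rx p p2 rx2 t in auto)
  have "(q - s)^2 \<ge> 0" by simp
  then have qs2: "2*q * s \<le> q^2 + s^2" by (simp add: power2_eq_square algebra_simps)
  define D where "D = (q+s)^2 + MU"
  have Dpos: "D > 0" using MU(2) by (simp add: D_def add_nonneg_pos)
  have "(q+s)^2 = q^2 + s^2 + 2*q * s" by (simp add: power2_eq_square algebra_simps)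
  then have D1: "D \<le> 4*t + 8*x" using qs2 q2 s2 MU(1) by (simp add: D_def)
  have "rx*rx \<le> p*rx" using prx rx by (simp add: mult_right_mono)
  then have "x \<le> p*rx" using rx2 by (simp add: power2_eq_square)
  then have D2: "D \<le> 4*p*(p+rx)" using D1 p2 by (simp add: power2_eq_square algebra_simps)
  have ts: "t \<le> s^2" using s2 z by simp
  have key: "t*D \<le> s^2*(4*p*(p+rx))"
    using ts D2 Dpos t by (intro mult_mono) auto
  have lhs: "1/(q * s^3*rx) - 1/(p*q * s^3) = t/((p+rx)*p*q * s^3*rx)"
    using p q s rx p2 rx2 by (intro diff_id) auto
  have rhs: "8*x/(q * s*D)/(2*x*rx) = 4/(rx*q * s*D)"
    using x q s rx Dpos by (simp add: field_simps)
  have "t/((p+rx)*p*q * s^3*rx) \<le> 4/(rx*q * s*D)"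
  proof (rule frac_cmp)
    show "(p+rx)*p*q * s^3*rx > 0" using p q s rx by simp
    show "rx*q * s*D > 0" using q s rx Dpos by simp
    have "t*D*(rx*q * s) \<le> s^2*(4*p*(p+rx))*(rx*q * s)"
      using key q s rx by (intro mult_right_mono) auto
    then show "t * (rx*q * s*D) \<le> 4 * ((p+rx)*p*q * s^3*rx)"
      by (simp add: power2_eq_square power3_eq_cube algebra_simps)
  qed
  then show ?thesis using lhs rhs by (simp add: D_def)
qed

lemma ineqB:
  fixes p q s rx t x y z M gl :: real
  assumes p: "p > 0" and q: "q > 0" and s: "s > 0" and rx: "rx > 0" and t: "t > 0" and z: "z > 0" and y: "y \<ge> 0"
    and p2: "p^2 = t+x" and rx2: "rx^2 = x" and q2: "q^2 = t+y" and s2: "s^2 = t+z"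
    and M: "M = 2*x+y+z" and gl: "gl \<le> x/(p^2*q * s)"
  shows "1/(p*q * s^3) \<le> 1/(q * s^3*rx) - (gl - z/(q * s^3) + z*(t/(t+M)^3))/(2*x*rx)"
proof -
  have x: "x > 0" using rx rx2 by (metis zero_less_power2 less_irrefl)
  have prx: "rx \<le> p" 
    by (rule sq_mono_base) (use rx p p2 rx2 t in auto)
  define w where "w = 2*x/((p+rx)*p)"
  have w1: "x/p^2 \<le> w" unfolding w_def
  proof (rule frac_cmp)
    show "p^2 > 0" using p by simp
    show "(p+rx)*p > 0" using p rx by simp
    have "x*((p+rx)*p) \<le> x*(2*p*p)" using prx x p by (intro mult_left_mono) auto
    then show "x * ((p+rx)*p) \<le> 2*x*p^2" by (simp add: power2_eq_square algebra_simps)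
  qed
  have "rx*rx \<le> p*rx" using prx rx by (simp add: mult_right_mono)
  then have xprx: "x \<le> p*rx" using rx2 by (simp add: power2_eq_square)
  have w2: "w \<le> 2*x/(t+2*x)" unfolding w_def
  proof (rule frac_cmp)
    show "(p+rx)*p > 0" using p rx by simp
    show "t+2*x > 0" using t x by simp
    have "t + 2*x \<le> (p+rx)*p" using xprx p2 by (simp add: power2_eq_square algebra_simps)
    then show "2*x*(t+2*x) \<le> 2*x*((p+rx)*p)" using x by simp
  qed
  have om: "t/(t+2*x) \<le> 1 - w"
  proof -
    have "1 - 2*x/(t+2*x) = t/(t+2*x)" using t x by (simp add: field_simps)
    then show ?thesis using w2 by simp
  qed
  have "(q - s)^2 \<ge> 0" by simp
  then have qs2: "2*q * s \<le> q^2 + s^2" by (simp add: power2_eq_square algebra_simps)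
  have qsM: "q * s \<le> t + M" using qs2 q2 s2 M x y z by simp
  have sM: "s^2 \<le> t + M" using s2 M x y by simp
  have tM: "t + M > 0" using t M x y z by simp
  have qs3: "q * s^3 \<le> (t+M)^2"
  proof -
    have "(q * s) * s^2 \<le> (t+M)*(t+M)" using qsM sM q s tM by (intro mult_mono) auto
    then show ?thesis by (simp add: power2_eq_square power3_eq_cube algebra_simps)
  qed
  have tM: "t + M > 0" using t M x y z by simp
  have T1: "t/(t+M)^3 \<le> (t/(t+2*x))/(t+M)^2"
  proof -
    have "t/(t+M) \<le> t/(t+2*x)" using t x M y z by (intro divide_left_mono) auto
    then have "(t/(t+M))/(t+M)^2 \<le> (t/(t+2*x))/(t+M)^2" using tM by (intro divide_right_mono) auto
    moreover have "(t/(t+M))/(t+M)^2 = t/(t+M)^3" by (simp add: power2_eq_square power3_eq_cube)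
    ultimately show ?thesis by (simp only:)
  qed
  have T2: "(t/(t+2*x))/(t+M)^2 \<le> (1-w)/(q * s^3)"
  proof (rule frac_le)
    have "t/(t+2*x) \<ge> 0" using t x by simp
    then show "0 \<le> 1 - w" using om by linarith
  qed (use om qs3 t x q s in auto)
  have glw: "gl \<le> w/(q * s)"
  proof -
    have "x/(p^2*q * s) = (x/p^2)/(q * s)" by simp
    also have "\<dots> \<le> w/(q * s)" using w1 q s by (intro divide_right_mono) auto
    finally show ?thesis using gl by simp
  qed
  have E: "gl - z/(q * s^3) + z*(t/(t+M)^3) \<le> w/(q * s) - z/(q * s^3) + z*((1-w)/(q * s^3))"
    using glw T1 T2 z by (smt (verit) mult_left_mono)
  have id1: "w/(q * s) - z/(q * s^3) + z*((1-w)/(q * s^3)) = 2*x*t/((p+rx)*p*q * s^3)"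
  proof -
    have "w/(q * s) - z/(q * s^3) + z*((1-w)/(q * s^3)) = w*(s^2 - z)/(q * s^3)"
      using q s by (simp add: field_simps power2_eq_square power3_eq_cube)
    also have "\<dots> = w*t/(q * s^3)" using s2 by simp
    also have "\<dots> = 2*x*t/((p+rx)*p*q * s^3)" unfolding w_def using p q s rx by (simp add: field_simps)
    finally show ?thesis .
  qed
  have lhs: "1/(q * s^3*rx) - 1/(p*q * s^3) = t/((p+rx)*p*q * s^3*rx)"
    using p q s rx p2 rx2 by (intro diff_id) auto
  have "(gl - z/(q * s^3) + z*(t/(t+M)^3))/(2*x*rx) \<le> (2*x*t/((p+rx)*p*q * s^3))/(2*x*rx)"
    using E id1 x rx by (intro divide_right_mono) auto
  also have "\<dots> = t/((p+rx)*p*q * s^3*rx)"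
  proof -
    define A where "A = (p+rx)*p*q * s^3"
    have "A > 0" using p q s rx unfolding A_def by simp
    then have "(2*x*t/A)/(2*x*rx) = t/(A*rx)" using x rx by (simp add: field_simps)
    then show ?thesis unfolding A_def by simp
  qed
  finally show ?thesis using lhs by simp
qed


lemma lim_FK: "(z::real) > 0 \<Longrightarrow> ((\<lambda>t::real. -2/(sqrt(t+z)*(sqrt(t+y)+sqrt(t+z)))) \<longlongrightarrow> 0) at_top"
  by real_asymp

lemma lim_T: "(M::real) > 0 \<Longrightarrow> ((\<lambda>t::real. -(2*t+M)/(2*(t+M)^2)) \<longlongrightarrow> 0) at_top"
  by real_asymp

lemma sum_sqrt_nz: "(y::real) \<ge> 0 \<Longrightarrow> z > 0 \<Longrightarrow> t \<ge> 0 \<Longrightarrow> sqrt(t+y)+sqrt(t+z) \<noteq> 0"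
proof -
  assume a: "y \<ge> 0" "z > 0" "t \<ge> 0"
  have "sqrt(t+z) > 0" using a by simp
  moreover have "sqrt(t+y) \<ge> 0" using a by simp
  ultimately show ?thesis by linarith
qed

lemma sq_plus_nz: "(M::real) > 0 \<Longrightarrow> a^2 + M \<noteq> 0"
proof -
  assume "M > 0"
  moreover have "a^2 \<ge> 0" by simp
  ultimately show ?thesis by linarith
qed

lemma gl_bound:
  fixes p q s t x y z sy sz NL :: real
  assumes p: "p > 0" and q: "q > 0" and s: "s > 0" and t: "t > 0" and sy: "sy \<ge> 0" "sy^2 = y" and sz: "sz \<ge> 0" "sz^2 = z"
    and p2: "p^2 = t+x" and q2: "q^2 = t+y" and s2: "s^2 = t+z" and NL: "NL = 4*x - (y+z) - 2*(sy* sz)" "NL > 0" and x: "x > 0"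
  shows "4*x/(q * s*((q+s)^2+NL)) \<le> x/(p^2*q * s)"
proof -
  have "(sy - sz)^2 \<ge> 0" by simp
  then have ab: "2*(sy* sz) \<le> y + z" using sy sz by (simp add: power2_eq_square algebra_simps)
  have "(t + sy* sz)^2 \<le> (q * s)^2"
  proof -
    have "(t + sy* sz)^2 = t^2 + 2*t*(sy* sz) + sy^2* sz^2" by (simp add: power2_eq_square algebra_simps)
    also have "\<dots> \<le> t^2 + t*(y+z) + y*z" using ab t sy sz by (simp add: mult_left_mono)
    also have "\<dots> = (t+y)*(t+z)" by (simp add: algebra_simps power2_eq_square)
    also have "\<dots> = (q * s)^2" using q2 s2 by (simp add: power_mult_distrib)
    finally show ?thesis .
  qed
  moreover have "0 \<le> t + sy* sz" using t sy(1) sz(1) by (simp add: add_pos_nonneg)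
  moreover have "0 \<le> q * s" using q s by simp
  ultimately have qs: "t + sy* sz \<le> q * s" by (rule sq_mono_base[rotated 2])
  have "(q+s)^2 = q^2 + s^2 + 2*q * s" by (simp add: power2_eq_square algebra_simps)
  then have e: "(q+s)^2 + NL = 2*t + 2*(q * s) + 4*x - 2*(sy* sz)" using q2 s2 NL(1) by simp
  have D: "4*p^2 \<le> (q+s)^2 + NL" unfolding e p2 using qs by (simp add: algebra_simps)
  have Dp: "(q+s)^2 + NL > 0" using NL by (simp add: add_nonneg_pos)
  show ?thesis
  proof (rule frac_cmp)
    show "q * s*((q+s)^2+NL) > 0" using q s Dp by simp
    show "p^2*q * s > 0" using p q s by simp
    have "4*p^2*(q * s) \<le> ((q+s)^2+NL)*(q * s)" using D q s by (intro mult_right_mono) auto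
    then have "x*(4*p^2*(q * s)) \<le> x*(((q+s)^2+NL)*(q * s))" using x by (intro mult_left_mono) auto
    then have "4*x*(p^2*(q * s)) \<le> x*(((q+s)^2+NL)*(q * s))" by (simp add: ac_simps)
    then show "4*x*(p^2*q * s) \<le> x*(q * s*((q+s)^2+NL))" by (simp add: ac_simps)
  qed
qed
lemma GL_exists:
  fixes x y z sy sz g :: real
  assumes hx: "x > 0" and hy: "y \<ge> 0" and hz: "z > 0" and sy_def: "sy = sqrt y" and sz_def: "sz = sqrt z"
    and g: "g = sy * sz" and hg: "g < x"
  obtains gl JL where "(gl has_integral JL) {0<..}"
    and "\<And>t. t > 0 \<Longrightarrow> gl t \<le> x/((sqrt(t+x))^2 * sqrt(t+y) * sqrt(t+z))"
    and "1 / (1 - g / x) * ln (2 * x / ((y + z) / 2 + g)) \<le> JL"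
proof -
  have sy: "sy \<ge> 0" "sy^2 = y" using hy by (auto simp: sy_def)
  have sz: "sz > 0" "sz^2 = z" using hz by (auto simp: sz_def)
  have "(sy - sz)^2 \<ge> 0" by simp
  then have ab: "2*g \<le> y + z" using sy sz g by (simp add: power2_eq_square algebra_simps)
  have g0: "g \<ge> 0" using g sy sz by simp
  have sqp: "sqrt(t+x) > 0" "sqrt(t+y) > 0" "sqrt(t+z) > 0" if t: "t > 0" for t
    using t hx hy hz by auto
  have sqq: "sqrt(t+x)^2 = t+x" "sqrt(t+y)^2 = t+y" "sqrt(t+z)^2 = t+z" if t: "t > 0" for t
    using t hx hy hz by auto
  show ?thesis
  proof (cases "(y+z)/2 + g < 2*x")
    case True
    define NL where "NL = 4*x - (y+z) - 2*(sy * sz)"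
    have "(y+z)/2 + sy * sz < 2*x" using True g by simp
    then have NL: "NL > 0" unfolding NL_def by (simp add: field_simps)
    define gl where "gl = (\<lambda>t. (4*x/NL) * NL / (sqrt(t+y) * sqrt(t+z) * ((sqrt(t+y)+sqrt(t+z))^2 + NL)))"
    define GL where "GL = (\<lambda>t. (4*x/NL) * (2 * ln (sqrt(t+y)+sqrt(t+z)) - ln ((sqrt(t+y)+sqrt(t+z))^2 + NL)))"
    have int: "(gl has_integral (0 - GL 0)) {0<..}"
    proof (rule ftc_Ioi)
      show "continuous_on {0..} GL" unfolding GL_def
        using hy hz NL by (auto intro!: continuous_intros simp: add_nonneg_pos add_pos_nonneg sum_sqrt_nz sq_plus_nz)
      show "(GL has_real_derivative gl t) (at t)" if "t > 0" for t
        unfolding GL_def gl_def using der_GL[OF hy hz that NL] .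
      show "gl t \<ge> 0" if "t > 0" for t unfolding gl_def using that hy hz NL hx
        by (simp add: add_nonneg_pos)
      show "(GL \<longlongrightarrow> 0) at_top" unfolding GL_def by (rule lim_G)
    qed
    have sp: "sy + sz > 0" using sy sz by simp
    have sq: "(sy+sz)^2 = y + z + 2*g" using sy sz g by (simp add: power2_eq_square algebra_simps)
    have den: "(y+z)/2 + g > 0" using hy hz g0 by (simp add: field_simps)
    have JLv: "0 - GL 0 = (4*x/NL) * ln (2*x/((y+z)/2+g))"
    proof -
      have "0 - GL 0 = (4*x/NL) * (ln ((sy+sz)^2 + NL) - 2 * ln (sy+sz))"
        unfolding GL_def using NL by (simp add: sy_def sz_def field_simps)
      also have "(sy+sz)^2 + NL = 4*x" using sq g by (simp add: NL_def)
      also have "2 * ln (sy+sz) = ln ((sy+sz)^2)" using sp by (simp add: ln_realpow)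
      also have "ln (4*x) - ln ((sy+sz)^2) = ln (4*x/(sy+sz)^2)" using sp hx by (simp add: ln_divide_pos)
      also have "4*x/(sy+sz)^2 = 2*x/((y+z)/2+g)" using sq den by (simp add: field_simps)
      finally show ?thesis .
    qed
    show ?thesis
    proof (rule that[of gl "0 - GL 0"])
      show "(gl has_integral (0 - GL 0)) {0<..}" by (rule int)
      fix t :: real assume t: "t > 0"
      have "gl t = 4*x/(sqrt(t+y) * sqrt(t+z)*((sqrt(t+y)+sqrt(t+z))^2+NL))"
        unfolding gl_def using NL by simp
      also have "\<dots> \<le> x/((sqrt(t+x))^2 * sqrt(t+y) * sqrt(t+z))"
        by (rule gl_bound[OF sqp(1)[OF t] sqp(2)[OF t] sqp(3)[OF t] t sy(1) sy(2) less_imp_le[OF sz(1)] sz(2) sqq(1)[OF t] sqq(2)[OF t] sqq(3)[OF t] NL_def NL hx])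
      finally show "gl t \<le> x/((sqrt(t+x))^2 * sqrt(t+y) * sqrt(t+z))" .
    next
      have lnn: "ln (2*x/((y+z)/2+g)) \<ge> 0" using True den by simp
      have xg: "x - g > 0" using hg by simp
      have "1/(1 - g/x) = x/(x-g)" using hx by (simp add: field_simps)
      also have "x/(x-g) \<le> 4*x/NL"
      proof (rule frac_cmp)
        show "x - g > 0" by (rule xg)
        show "NL > 0" by (rule NL)
        have "NL \<le> 4*(x-g)" using ab unfolding NL_def g[symmetric] by (simp add: algebra_simps)
        then have "x*NL \<le> x*(4*(x-g))" using hx by (intro mult_left_mono) auto
        then show "x*NL \<le> 4*x*(x-g)" by (simp add: algebra_simps)
      qed
      finally have "1/(1 - g/x) \<le> 4*x/NL" .
      then have "1/(1 - g/x) * ln (2*x/((y+z)/2+g)) \<le> 4*x/NL * ln (2*x/((y+z)/2+g))"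
        using lnn by (rule mult_right_mono)
      then show "1/(1 - g/x) * ln (2*x/((y+z)/2+g)) \<le> 0 - GL 0" using JLv by simp
    qed
  next
    case False
    show ?thesis
    proof (rule that[of "\<lambda>t. 0" 0])
      show "((\<lambda>t. 0) has_integral (0::real)) {0<..}" by simp
      fix t :: real assume t: "t > 0"
      show "0 \<le> x/((sqrt(t+x))^2 * sqrt(t+y) * sqrt(t+z))" using t hx hy hz by simp
    next
      have den: "(y+z)/2 + g > 0" using hy hz g0 by (simp add: field_simps)
      have lnn: "ln (2*x/((y+z)/2+g)) \<le> 0" using False den hx by simp
      have pos: "1/(1 - g/x) > 0" using hx hg by (simp add: field_simps)
      show "1/(1 - g/x) * ln (2*x/((y+z)/2+g)) \<le> 0"
        using mult_nonneg_nonpos[OF less_imp_le[OF pos] lnn] .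
    qed
  qed

qed

theorem mainTheorem8:
  fixes x y z :: real
  assumes hx: "x > 0" and hy: "y \<ge> 0" and hz: "z > 0"
    and hg: "sqrt (y * z) < x" and ha: "(y + z) / 2 < 2 * x"
  shows "\<exists>r. carlson_RD x y z = 3 / sqrt x * (1 / (sqrt (y * z) + z) - r / (4 * x))
           \<and> 1 / (1 - sqrt (y * z) / x) * ln (2 * x / ((y + z) / 2 + sqrt (y * z)))
               - 2 * z / (sqrt (y * z) + z) < r
           \<and> r < 1 / (1 - ((y + z) / 2) / (2 * x)) * ln (8 * x / ((y + z) / 2 + sqrt (y * z)))"
  
proof -
  define sy where "sy = sqrt y"
  define sz where "sz = sqrt z"
  define rx where "rx = sqrt x"
  define g where "g = sqrt (y*z)"
  have sy: "sy \<ge> 0" "sy^2 = y" using hy by (auto simp: sy_def)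
  have sz: "sz > 0" "sz^2 = z" using hz by (auto simp: sz_def)
  have rx: "rx > 0" "rx^2 = x" using hx by (auto simp: rx_def)
  have g: "g = sy* sz" by (simp add: g_def sy_def sz_def real_sqrt_mult)
  have "(sy - sz)^2 \<ge> 0" by simp
  then have ab: "2*g \<le> y + z" using sy sz g by (simp add: power2_eq_square algebra_simps)
  have g0: "g \<ge> 0" using g sy sz by simp
  have gz: "g + z > 0" using g0 hz by simp
  define \<Phi> where "\<Phi> = (\<lambda>t::real. 1 / (sqrt ((t + x) * (t + y)) * (t + z) powr (3/2)))"
  have RD: "carlson_RD x y z = 3/2 * integral {0..} \<Phi>" by (simp add: carlson_RD_def \<Phi>_def)
  define K where "K = (\<lambda>t::real. 1/(sqrt(t+y) * sqrt(t+z)^3))"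
  define FK where "FK = (\<lambda>t::real. -2/(sqrt(t+z)*(sqrt(t+y)+sqrt(t+z))))"
  have intK: "(K has_integral 2/(g+z)) {0<..}"
  proof -
    have "(K has_integral (0 - FK 0)) {0<..}"
    proof (rule ftc_Ioi)
      show "continuous_on {0..} FK" unfolding FK_def
        using hy hz by (auto intro!: continuous_intros simp: add_nonneg_pos add_pos_nonneg sum_sqrt_nz sq_plus_nz)
      show "(FK has_real_derivative K t) (at t)" if "t > 0" for t
        unfolding FK_def K_def using der_FK[OF hy hz that] .
      show "K t \<ge> 0" if "t > 0" for t unfolding K_def using that hy hz by simp
      show "(FK \<longlongrightarrow> 0) at_top" unfolding FK_def using lim_FK[OF hz] .
    qed
    moreover have "0 - FK 0 = 2/(g+z)"
      unfolding FK_def g using sz sy by (simp flip: sy_def sz_def add: field_simps power2_eq_square)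
    ultimately show ?thesis by simp
  qed
  define MU where "MU = 8*x - 2*(y+z)"
  have MU: "MU > 0" using ha by (simp add: MU_def)
  define gu where "gu = (\<lambda>t. (8*x/MU) * MU / (sqrt(t+y) * sqrt(t+z) * ((sqrt(t+y)+sqrt(t+z))^2 + MU)))"
  define GU where "GU = (\<lambda>t. (8*x/MU) * (2 * ln (sqrt(t+y)+sqrt(t+z)) - ln ((sqrt(t+y)+sqrt(t+z))^2 + MU)))"
  define JU where "JU = 0 - GU 0"
  have intGU: "(gu has_integral JU) {0<..}"
    unfolding JU_def
  proof (rule ftc_Ioi)
    show "continuous_on {0..} GU" unfolding GU_def
      using hy hz MU by (auto intro!: continuous_intros simp: add_nonneg_pos add_pos_nonneg sum_sqrt_nz sq_plus_nz)
    show "(GU has_real_derivative gu t) (at t)" if "t > 0" for t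
      unfolding GU_def gu_def using der_GL[OF hy hz that MU] .
    show "gu t \<ge> 0" if "t > 0" for t unfolding gu_def using that hy hz MU hx
      by (simp add: add_nonneg_pos)
    show "(GU \<longlongrightarrow> 0) at_top" unfolding GU_def by (rule lim_G)
  qed
  define M where "M = 2*x+y+z"
  have Mpos: "M > 0" using hx hy hz by (simp add: M_def)
  have intT: "((\<lambda>t. t/(t+M)^3) has_integral 1/(2*M)) {0<..}"
  proof -
    have "((\<lambda>t. t/(t+M)^3) has_integral (0 - (-(2*0+M)/(2*(0+M)^2)))) {0<..}"
    proof (rule ftc_Ioi)
      show "continuous_on {0..} (\<lambda>t. -(2*t+M)/(2*(t+M)^2))"
        using Mpos by (auto intro!: continuous_intros simp: add_nonneg_pos)
      show "((\<lambda>t. -(2*t+M)/(2*(t+M)^2)) has_real_derivative t/(t+M)^3) (at t)" if "t > 0" for t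
        using der_T[OF Mpos that] .
      show "t/(t+M)^3 \<ge> 0" if "t > 0" for t using that Mpos by simp
      show "((\<lambda>t. -(2*t+M)/(2*(t+M)^2)) \<longlongrightarrow> 0) at_top" using lim_T[OF Mpos] .
    qed
    moreover have "0 - (-(2*0+M)/(2*(0+M)^2)) = 1/(2*M)" using Mpos by (simp add: power2_eq_square)
    ultimately show ?thesis by simp
  qed
  have sqp: "sqrt(t+x) > 0" "sqrt(t+y) > 0" "sqrt(t+z) > 0" if t: "t > 0" for t
    using t hx hy hz by auto
  have sqq: "sqrt(t+x)^2 = t+x" "sqrt(t+y)^2 = t+y" "sqrt(t+z)^2 = t+z" if t: "t > 0" for t
    using t hx hy hz by auto
  obtain gl JL where intGL: "(gl has_integral JL) {0<..}"
    and glb: "\<And>t. t > 0 \<Longrightarrow> gl t \<le> x/((sqrt(t+x))^2 * sqrt(t+y) * sqrt(t+z))"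
    and JLb: "1 / (1 - g / x) * ln (2 * x / ((y + z) / 2 + g)) \<le> JL"
    using GL_exists[OF hx hy hz sy_def sz_def g] hg unfolding g_def[symmetric] by blast
  define lo where "lo = (\<lambda>t. K t / rx - gu t / (2*x*rx))"
  define hi where "hi = (\<lambda>t. K t / rx - (gl t - z * K t + z * (t/(t+M)^3)) / (2*x*rx))"
  have Phi_eq: "\<Phi> t = 1/(sqrt(t+x) * sqrt(t+y) * sqrt(t+z)^3)" if "t > 0" for t
    unfolding \<Phi>_def using that hx hy hz by (simp add: powr32 real_sqrt_mult)
  have lo_le: "lo t \<le> \<Phi> t" if t: "t > 0" for t
  proof -
    note sp = sqp[OF t] and sq = sqq[OF t]
    have "lo t = 1/(sqrt(t+y) * sqrt(t+z)^3 * rx) - 8*x/(sqrt(t+y) * sqrt(t+z)*((sqrt(t+y)+sqrt(t+z))^2+MU))/(2*x*rx)"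
      unfolding lo_def K_def gu_def using MU by simp
    also have "\<dots> \<le> 1/(sqrt(t+x) * sqrt(t+y) * sqrt(t+z)^3)"
      by (rule ineqA[OF sp(1) sp(2) sp(3) rx(1) t hz hy sq(1) rx(2) sq(2) sq(3) MU_def MU])
    finally show ?thesis using Phi_eq[OF t] by simp
  qed
  have hi_ge: "\<Phi> t \<le> hi t" if t: "t > 0" for t
  proof -
    note sp = sqp[OF t] and sq = sqq[OF t]
    have "1/(sqrt(t+x) * sqrt(t+y) * sqrt(t+z)^3) \<le> 1/(sqrt(t+y) * sqrt(t+z)^3*rx) - (gl t - z/(sqrt(t+y) * sqrt(t+z)^3) + z*(t/(t+M)^3))/(2*x*rx)"
      by (rule ineqB[OF sp(1) sp(2) sp(3) rx(1) t hz hy sq(1) rx(2) sq(2) sq(3) M_def glb[OF t]])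
    then show ?thesis using Phi_eq[OF t] unfolding hi_def K_def by simp
  qed
  have Phi_int: "\<Phi> integrable_on {0<..}"
  proof (rule measurable_bounded_by_integrable_imp_integrable_real)
    show "{0<..} \<in> sets (lebesgue :: real measure)" by simp
    have "continuous_on {0<..} (\<lambda>t. 1/(sqrt(t+x) * sqrt(t+y) * sqrt(t+z)^3))"
      using hx hy hz by (auto intro!: continuous_intros simp: add_pos_nonneg)
    then have "continuous_on {0<..} \<Phi>"
      by (rule continuous_on_cong[THEN iffD1, rotated 2]) (auto simp: Phi_eq)
    then show "\<Phi> \<in> borel_measurable (lebesgue_on {0<..})"
      by (rule continuous_imp_measurable_on_sets_lebesgue) simp
    show "(\<lambda>t. K t / rx) integrable_on {0<..}"
      using intK by (intro has_integral_integrable[OF has_integral_divide])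
    fix t :: real assume "t \<in> {0<..}"
    then have t: "t > 0" by simp
    have prx: "rx \<le> sqrt(t+x)" using t unfolding rx_def by simp
    have pos: "sqrt(t+y) * sqrt(t+z)^3 > 0" using t hy hz by simp
    have "1/(sqrt(t+x) * (sqrt(t+y) * sqrt(t+z)^3)) \<le> 1/(rx * (sqrt(t+y) * sqrt(t+z)^3))"
    proof (rule divide_left_mono)
      show "rx * (sqrt(t+y) * sqrt(t+z)^3) \<le> sqrt(t+x) * (sqrt(t+y) * sqrt(t+z)^3)"
        using prx pos by (rule mult_right_mono[OF _ less_imp_le])
      show "0 < sqrt(t+x) * (sqrt(t+y) * sqrt(t+z)^3) * (rx * (sqrt(t+y) * sqrt(t+z)^3))"
        using pos rx(1) t hx by simp
    qed simp
    then show "\<bar>\<Phi> t\<bar> \<le> K t / rx" using t hx hy hz unfolding Phi_eq[OF t] K_def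
      by (simp add: ac_simps)
  qed
  define I where "I = integral {0<..} \<Phi>"
  have intPhi: "(\<Phi> has_integral I) {0<..}" using Phi_int by (simp add: I_def has_integral_integral)
  have I0: "integral {0..} \<Phi> = I"
  proof -
    have "(\<Phi> has_integral I) {0..}"
      by (rule has_integral_spike_set_eq[THEN iffD1, OF _ _ intPhi])
         (auto intro: negligible_subset[of "{0}"])
    then show ?thesis by (rule integral_unique)
  qed
  have int_lo: "(lo has_integral ((2/(g+z))/rx - JU/(2*x*rx))) {0<..}"
    unfolding lo_def by (intro has_integral_diff has_integral_divide intK intGU)
  have int_hi: "(hi has_integral ((2/(g+z))/rx - (JL - z*(2/(g+z)) + z*(1/(2*M)))/(2*x*rx))) {0<..}"
    unfolding hi_def by (intro has_integral_diff has_integral_divide has_integral_add has_integral_mult_right intK intGL intT)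
  have Ilo: "(2/(g+z))/rx - JU/(2*x*rx) \<le> I"
    using int_lo intPhi lo_le by (rule has_integral_le) auto
  have Ihi: "I \<le> (2/(g+z))/rx - (JL - z*(2/(g+z)) + z*(1/(2*M)))/(2*x*rx)"
    using intPhi int_hi hi_ge by (rule has_integral_le) auto
  define r where "r = 4*x*(1/(g+z) - rx*carlson_RD x y z/3)"
  have r_eq: "r = 4*x/(g+z) - 2*x*rx*I" using RD I0 by (simp add: r_def field_simps)
  have JU_v: "JU = (8*x/MU) * (ln ((sy+sz)^2 + MU) - 2 * ln (sy+sz))"
    unfolding JU_def GU_def using MU by (simp add: sy_def sz_def field_simps)
  have sp: "sy + sz > 0" using sy sz by simp
  have sq: "(sy+sz)^2 = y + z + 2*g" using sy sz g by (simp add: power2_eq_square algebra_simps)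
  have den: "(y+z)/2 + g > 0" using hy hz g0 by (simp add: field_simps)
  have rU: "r \<le> JU"
  proof -
    have "2*x*rx*((2/(g+z))/rx - JU/(2*x*rx)) \<le> 2*x*rx*I" using Ilo hx rx by (simp add: mult_left_mono)
    moreover have "2*x*rx*((2/(g+z))/rx - JU/(2*x*rx)) = 4*x/(g+z) - JU"
    proof -
      have e1: "2*x*rx*((2/(g+z))/rx) = 4*x/(g+z)" using rx(1) by simp
      have e2: "2*x*rx*(JU/(2*x*rx)) = JU" using hx rx(1) by simp
      show ?thesis unfolding right_diff_distrib e1 e2 ..
    qed
    ultimately show ?thesis using r_eq by simp
  qed
  have JUU: "JU < 1 / (1 - ((y + z) / 2) / (2 * x)) * ln (8 * x / ((y + z) / 2 + g))"
  proof -
    have c: "8*x/MU = 1 / (1 - ((y + z) / 2) / (2 * x))" using hx MU by (simp add: MU_def field_simps)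
    have "ln ((sy+sz)^2 + MU) - 2 * ln (sy+sz) = ln (((sy+sz)^2 + MU)/(sy+sz)^2)"
      using sp MU by (simp add: ln_realpow ln_divide_pos add_pos_pos)
    also have "\<dots> < ln (8 * x / ((y + z) / 2 + g))"
    proof (subst ln_less_cancel_iff)
      show "0 < ((sy+sz)^2 + MU)/(sy+sz)^2" using sp MU by (simp add: add_pos_pos)
      show "0 < 8 * x / ((y + z) / 2 + g)" using hx den by simp
      have "((sy+sz)^2 + MU)/(sy+sz)^2 = (8*x - (y+z) + 2*g)/(y+z+2*g)" using sq by (simp add: MU_def)
      also have "\<dots> < 16*x/(y+z+2*g)"
      proof (rule divide_strict_right_mono)
        show "0 < y+z+2*g" using hy hz g0 by simp
        show "8*x - (y+z) + 2*g < 16*x" using ab hx by simp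
      qed
      also have "\<dots> = 8 * x / ((y + z) / 2 + g)" using den by (simp add: field_simps)
      finally show "((sy+sz)^2 + MU)/(sy+sz)^2 < 8 * x / ((y + z) / 2 + g)" .
    qed
    finally have "ln ((sy+sz)^2 + MU) - 2 * ln (sy+sz) < ln (8 * x / ((y + z) / 2 + g))" .
    moreover have "8*x/MU > 0" using hx MU by simp
    ultimately have "8*x/MU * (ln ((sy+sz)^2 + MU) - 2 * ln (sy+sz)) < 8*x/MU * ln (8 * x / ((y + z) / 2 + g))"
      by (rule mult_strict_left_mono)
    then show ?thesis using JU_v c by simp
  qed
  have rL: "JL - z*(2/(g+z)) + z*(1/(2*M)) \<le> r"
  proof -
    have "2*x*rx*I \<le> 2*x*rx*((2/(g+z))/rx - (JL - z*(2/(g+z)) + z*(1/(2*M)))/(2*x*rx))"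
      using Ihi hx rx by (simp add: mult_left_mono)
    moreover have "2*x*rx*((2/(g+z))/rx - (JL - z*(2/(g+z)) + z*(1/(2*M)))/(2*x*rx)) = 4*x/(g+z) - (JL - z*(2/(g+z)) + z*(1/(2*M)))"
    proof -
      have e1: "2*x*rx*((2/(g+z))/rx) = 4*x/(g+z)" using rx(1) by simp
      have e2: "2*x*rx*((JL - z*(2/(g+z)) + z*(1/(2*M)))/(2*x*rx)) = JL - z*(2/(g+z)) + z*(1/(2*M))" using hx rx(1) by simp
      show ?thesis unfolding right_diff_distrib e1 e2 ..
    qed
    ultimately show ?thesis using r_eq by simp
  qed
  have zM: "z*(1/(2*M)) > 0" using hz Mpos by simp
  show ?thesis
  proof (intro exI[of _ r] conjI)
    show "carlson_RD x y z = 3 / sqrt x * (1 / (sqrt (y * z) + z) - r / (4 * x))"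
      unfolding r_def g_def[symmetric] rx_def[symmetric] using hx rx by (simp add: field_simps)
    show "1 / (1 - sqrt (y * z) / x) * ln (2 * x / ((y + z) / 2 + sqrt (y * z))) - 2 * z / (sqrt (y * z) + z) < r"
      using JLb rL zM unfolding g_def by simp
    show "r < 1 / (1 - ((y + z) / 2) / (2 * x)) * ln (8 * x / ((y + z) / 2 + sqrt (y * z)))"
      using rU JUU unfolding g_def by simp
  qed
qed


end
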